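(* Let $R$ be a (unital, not necessarily associative) ring and let $\sigma\colon R\to R$ be an additive bijection with $\sigma(1)=1$. Let $S=R[X^{\pm};\sigma]$ and let $T=R[X;\sigma,0]\subseteq S$. If $I$ is a left ideal of $S$, then $I=S(I\cap T)$. If $I$ is a right ideal of $S$, then $I=(I\cap T)S$.
   Context: A left (right) ideal of a non-associative ring $S$ is an additive subgroup $I$ with $sI\subseteq I$ ($Is\subseteq I$) for all $s\in S$. $S=R[X^{\pm};\sigma]$ is the additive group of formal sums $\sum_{i\in\mathbb{Z}} r_iX^i$ ($r_i\in R$, finitely many non-zero) with pointwise addition and multiplication the biadditive extension of $(rX^m)(sX^n)=(r\sigma^m(s))X^{m+n}$ for $r,s\in R$, $m,n\in\mathbb{Z}$. $T=R[X;\sigma,0]$ is the subset of $S$ of elements with $r_i=0$ for all $i<0$ (with the same multiplication, i.e. the non-associative Ore extension with $\delta=0$). For subsets $A,B\subseteq S$, $AB$ denotes the set of finite sums $\sum a_kb_k$ with $a_k\in A$, $b_k\in B$. *)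

theory Defs
  imports Main
begin

class nonassoc_ring_1 = ab_group_add + times + one +
  assumes na_distrib_left: "a * (b + c) = a * b + a * c"
    and na_distrib_right: "(a + b) * c = a * c + b * c"
    and na_mult_1_left: "1 * a = a"
    and na_mult_1_right: "a * 1 = a"

text \<open>Elements of R[X^{+-};sigma] are represented by their coefficient functions
int => R with finite support.\<close>
definition lpoly :: "(int \<Rightarrow> 'a::zero) set" where
  "lpoly = {f. finite {i. f i \<noteq> 0}}"

definition tpoly :: "(int \<Rightarrow> 'a::zero) set" where
  "tpoly = {f \<in> lpoly. \<forall>i<0. f i = 0}"

definition sig_pow :: "('a \<Rightarrow> 'a) \<Rightarrow> int \<Rightarrow> 'a \<Rightarrow> 'a" where
  "sig_pow \<sigma> m = (if 0 \<le> m then \<sigma> ^^ nat m else inv \<sigma> ^^ nat (- m))"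

text \<open>Multiplication: biadditive extension of (r X^m)(s X^n) = (r sigma^m(s)) X^(m+n).\<close>
definition lmult :: "('a::nonassoc_ring_1 \<Rightarrow> 'a) \<Rightarrow> (int \<Rightarrow> 'a) \<Rightarrow> (int \<Rightarrow> 'a) \<Rightarrow> (int \<Rightarrow> 'a)" where
  "lmult \<sigma> f g = (\<lambda>n. \<Sum>m\<in>{m. f m \<noteq> 0}. f m * sig_pow \<sigma> m (g (n - m)))"

definition add_subgroup :: "(int \<Rightarrow> 'a::ab_group_add) set \<Rightarrow> bool" where
  "add_subgroup I \<longleftrightarrow> I \<subseteq> lpoly \<and> (\<lambda>_. 0) \<in> I \<and>
     (\<forall>x\<in>I. \<forall>y\<in>I. (\<lambda>n. x n - y n) \<in> I)"

definition left_ideal :: "('a::nonassoc_ring_1 \<Rightarrow> 'a) \<Rightarrow> (int \<Rightarrow> 'a) set \<Rightarrow> bool" where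
  "left_ideal \<sigma> I \<longleftrightarrow> add_subgroup I \<and> (\<forall>s\<in>lpoly. \<forall>x\<in>I. lmult \<sigma> s x \<in> I)"

definition right_ideal :: "('a::nonassoc_ring_1 \<Rightarrow> 'a) \<Rightarrow> (int \<Rightarrow> 'a) set \<Rightarrow> bool" where
  "right_ideal \<sigma> I \<longleftrightarrow> add_subgroup I \<and> (\<forall>s\<in>lpoly. \<forall>x\<in>I. lmult \<sigma> x s \<in> I)"

definition set_prod :: "('a::nonassoc_ring_1 \<Rightarrow> 'a) \<Rightarrow> (int \<Rightarrow> 'a) set \<Rightarrow> (int \<Rightarrow> 'a) set \<Rightarrow> (int \<Rightarrow> 'a) set" where
  "set_prod \<sigma> A B = {(\<lambda>n. \<Sum>k<N. lmult \<sigma> (a k) (b k) n) | (N::nat) a b.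
       \<forall>k<N. a k \<in> A \<and> b k \<in> B}"

end

theory Submission
  imports Defs
begin

lemma na_mult_0_left: "(0::'a::nonassoc_ring_1) * a = 0"
proof -
  have "0 * a = (0 + 0) * a" by simp
  also have "\<dots> = 0 * a + 0 * a" by (rule na_distrib_right)
  finally show ?thesis by simp
qed

lemma na_mult_0_right: "(a::'a::nonassoc_ring_1) * 0 = 0"
proof -
  have "a * 0 = a * (0 + 0)" by simp
  also have "\<dots> = a * 0 + a * 0" by (rule na_distrib_left)
  finally show ?thesis by simp
qed

definition mono1 :: "int \<Rightarrow> int \<Rightarrow> 'a::nonassoc_ring_1" where
  "mono1 m = (\<lambda>i. if i = m then 1 else 0)"

lemma mono1_lpoly: "mono1 m \<in> lpoly"
  unfolding lpoly_def mono1_def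
  by (rule CollectI, rule finite_subset[of _ "{m}"]) auto

lemma lmult_sum:
  assumes "finite A" "{m. f m \<noteq> 0} \<subseteq> A"
  shows "lmult \<sigma> f g n = (\<Sum>m\<in>A. f m * sig_pow \<sigma> m (g (n - m)))"
  unfolding lmult_def
  by (rule sum.mono_neutral_left) (use assms in \<open>auto simp: na_mult_0_left\<close>)

lemma lmult_mono_left: "lmult \<sigma> (mono1 m) g n = sig_pow \<sigma> m (g (n - m))"
proof -
  have "lmult \<sigma> (mono1 m) g n = (\<Sum>k\<in>{m}. mono1 m k * sig_pow \<sigma> k (g (n - k)))"
    by (rule lmult_sum) (auto simp: mono1_def)
  then show ?thesis by (simp add: mono1_def na_mult_1_left)
qed

lemma lmult_mono_right:
  assumes "finite {i. f i \<noteq> 0}"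
    and z: "\<And>k. sig_pow \<sigma> k 0 = 0" and o: "\<And>k. sig_pow \<sigma> k 1 = 1"
  shows "lmult \<sigma> f (mono1 m) n = f (n - m)"
proof -
  have "lmult \<sigma> f (mono1 m) n = (\<Sum>k\<in>insert (n-m) {i. f i \<noteq> 0}. f k * sig_pow \<sigma> k (mono1 m (n - k)))"
    by (rule lmult_sum) (use assms in auto)
  also have "\<dots> = (\<Sum>k\<in>insert (n-m) {i. f i \<noteq> 0}. if k = n - m then f k else 0)"
    by (rule sum.cong) (auto simp: mono1_def z o na_mult_1_right na_mult_0_right)
  also have "\<dots> = f (n - m)" using assms(1) by (simp add: sum.delta)
  finally show ?thesis .
qed

lemma add_sub_closed:
  assumes "add_subgroup I" "x \<in> I" "y \<in> I"
  shows "(\<lambda>n. x n + y n) \<in> I"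
proof -
  have z: "(\<lambda>_. 0) \<in> I" and sub: "\<And>u v. u \<in> I \<Longrightarrow> v \<in> I \<Longrightarrow> (\<lambda>n. u n - v n) \<in> I"
    using assms(1) unfolding add_subgroup_def by auto
  have "(\<lambda>n. (0::'a) - y n) \<in> I" using sub[OF z assms(3)] by simp
  from sub[OF assms(2) this] show ?thesis by simp
qed

lemma sum_closed:
  fixes N :: nat
  assumes "add_subgroup I" "\<forall>k<N. c k \<in> I"
  shows "(\<lambda>n. \<Sum>k<N. c k n) \<in> I"
  using assms(2)
proof (induction N)
  case 0
  have "(\<lambda>_. 0) \<in> I" using assms(1) unfolding add_subgroup_def by auto
  then show ?case by simp
next
  case (Suc N)
  have a: "(\<lambda>n. \<Sum>k<N. c k n) \<in> I" using Suc by simp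
  have b: "c N \<in> I" using Suc.prems by simp
  have "(\<lambda>n. (\<lambda>n. \<Sum>k<N. c k n) n + c N n) \<in> I"
    by (rule add_sub_closed[OF assms(1) a b])
  then show ?case by simp
qed

lemma bounded_support:
  assumes "finite {i::int. x i \<noteq> 0}"
  obtains m where "m \<ge> 0" "\<forall>i. i < - m \<longrightarrow> x i = 0"
proof -
  obtain b where b: "\<forall>i\<in>{i. x i \<noteq> 0}. b \<le> i"
    using bdd_below_finite[OF assms] unfolding bdd_below_def by blast
  show ?thesis
  proof (rule that[of "max 0 (- b)"])
    show "0 \<le> max 0 (- b)" by simp
    show "\<forall>i. i < - max 0 (- b) \<longrightarrow> x i = 0"
    proof (intro allI impI)
      fix i assume "i < - max 0 (- b)"
      then have "i < b" by simp
      then show "x i = 0" using b by fastforce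
    qed
  qed
qed

context
  fixes \<sigma> :: "'a::nonassoc_ring_1 \<Rightarrow> 'a"
  assumes add: "\<forall>x y. \<sigma> (x + y) = \<sigma> x + \<sigma> y"
    and bj: "bij \<sigma>"
    and one: "\<sigma> 1 = 1"
begin

lemma s0: "\<sigma> 0 = 0"
proof -
  have h: "\<sigma> (0 + 0) = \<sigma> 0 + \<sigma> 0" by (rule add[rule_format])
  have "\<sigma> 0 + \<sigma> 0 = \<sigma> (0 + 0)" using h by (rule sym)
  also have "\<dots> = \<sigma> 0" by (simp only: add_0_left)
  also have "\<dots> = \<sigma> 0 + 0" by (rule add_0_right[symmetric])
  finally have "\<sigma> 0 + \<sigma> 0 = \<sigma> 0 + 0" .
  then show ?thesis by (rule add_left_imp_eq)
qed

lemma is0: "inv \<sigma> 0 = 0"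
proof -
  have "inv \<sigma> (\<sigma> 0) = 0" by (rule inv_f_f[OF bij_is_inj[OF bj]])
  then show ?thesis by (simp only: s0)
qed

lemma is1: "inv \<sigma> 1 = 1"
proof -
  have "inv \<sigma> (\<sigma> 1) = 1" by (rule inv_f_f[OF bij_is_inj[OF bj]])
  then show ?thesis by (simp only: one)
qed

lemma pow_fix: "\<sigma> a = a \<Longrightarrow> (\<sigma> ^^ k) a = a" "inv \<sigma> a = a \<Longrightarrow> (inv \<sigma> ^^ k) a = a"
  by (induction k) auto

lemma sp0: "sig_pow \<sigma> k 0 = 0"
  unfolding sig_pow_def using pow_fix(1)[OF s0] pow_fix(2)[OF is0] by simp

lemma sp1: "sig_pow \<sigma> k 1 = 1"
  unfolding sig_pow_def using pow_fix(1)[OF one] pow_fix(2)[OF is1] by simp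

lemma inv_pow: "(inv \<sigma> ^^ k) ((\<sigma> ^^ k) a) = a"
proof (induction k arbitrary: a)
  case (Suc k)
  have e: "(inv \<sigma> ^^ Suc k) b = (inv \<sigma> ^^ k) (inv \<sigma> b)" for b
    by (simp only: funpow_Suc_right comp_def)
  have "(inv \<sigma> ^^ Suc k) ((\<sigma> ^^ Suc k) a) = (inv \<sigma> ^^ k) (inv \<sigma> (\<sigma> ((\<sigma> ^^ k) a)))"
  proof -
    have f: "(\<sigma> ^^ Suc k) a = \<sigma> ((\<sigma> ^^ k) a)" by simp
    show ?thesis by (simp only: e f)
  qed
  also have "\<dots> = a" using Suc bj by (simp add: bij_is_inj)
  finally show ?case .
qed simp

lemma sp_cancel: "m \<ge> 0 \<Longrightarrow> sig_pow \<sigma> (- m) (sig_pow \<sigma> m a) = a"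
proof -
  assume m: "m \<ge> 0"
  show ?thesis
  proof (cases "m = 0")
    case True then show ?thesis by (simp add: sig_pow_def)
  next
    case False
    then have "sig_pow \<sigma> (- m) (sig_pow \<sigma> m a) = (inv \<sigma> ^^ nat m) ((\<sigma> ^^ nat m) a)"
      using m by (simp add: sig_pow_def)
    then show ?thesis by (simp only: inv_pow)
  qed
qed

end

lemma lt1: "{..<1::nat} = {0}" by auto

theorem proposition17:
  fixes \<sigma> :: "'a::nonassoc_ring_1 \<Rightarrow> 'a" and I :: "(int \<Rightarrow> 'a) set"
  assumes "\<forall>x y. \<sigma> (x + y) = \<sigma> x + \<sigma> y"
    and "bij \<sigma>"
    and "\<sigma> 1 = 1"
  shows "(left_ideal \<sigma> I \<longrightarrow> I = set_prod \<sigma> lpoly (I \<inter> tpoly))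
       \<and> (right_ideal \<sigma> I \<longrightarrow> I = set_prod \<sigma> (I \<inter> tpoly) lpoly)"
proof safe
  note sp0 = sp0[OF assms] and sp1 = sp1[OF assms] and spc = sp_cancel[OF assms]
  {
    assume L: "left_ideal \<sigma> I"
    then have G: "add_subgroup I" unfolding left_ideal_def by blast
    show "x \<in> set_prod \<sigma> lpoly (I \<inter> tpoly)" if x: "x \<in> I" for x
    proof -
      have xl: "x \<in> lpoly" using G x unfolding add_subgroup_def by blast
      then obtain m where m: "m \<ge> 0" "\<forall>i. i < - m \<longrightarrow> x i = 0"
        using bounded_support unfolding lpoly_def by blast
      define y where "y = lmult \<sigma> (mono1 m) x"
      have yI: "y \<in> I" using L x mono1_lpoly unfolding left_ideal_def y_def by blast
      have yl: "y \<in> lpoly" using G yI unfolding add_subgroup_def by blast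
      have "y \<in> tpoly" unfolding tpoly_def
        using yl m by (auto simp: y_def lmult_mono_left sp0)
      moreover have "x = (\<lambda>n. \<Sum>k<(1::nat). lmult \<sigma> ((\<lambda>_. mono1 (-m)) k) ((\<lambda>_. y) k) n)"
      proof
        fix n show "x n = (\<Sum>k<(1::nat). lmult \<sigma> ((\<lambda>_. mono1 (-m)) k) ((\<lambda>_. y) k) n)"
          by (simp add: lmult_mono_left y_def spc m lt1)
      qed
      ultimately show ?thesis unfolding set_prod_def using yI mono1_lpoly
        by (intro CollectI exI[of _ 1] exI[of _ "\<lambda>_. mono1 (-m)"] exI[of _ "\<lambda>_. y"]) auto
    qed
    show "x \<in> I" if "x \<in> set_prod \<sigma> lpoly (I \<inter> tpoly)" for x
    proof -
      note xin = that
      obtain N :: nat and a b where xe: "x = (\<lambda>n. \<Sum>k<N. lmult \<sigma> (a k) (b k) n)"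
        and ab: "\<forall>k<N. a k \<in> lpoly \<and> b k \<in> I \<inter> tpoly"
        using xin unfolding set_prod_def by blast
      have "\<forall>k<N. lmult \<sigma> (a k) (b k) \<in> I"
      proof (intro allI impI)
        fix k assume "k < N"
        then have "a k \<in> lpoly \<and> b k \<in> I \<inter> tpoly" using ab by blast
        then show "lmult \<sigma> (a k) (b k) \<in> I" using L unfolding left_ideal_def by blast
      qed
      then show ?thesis unfolding xe by (rule sum_closed[OF G])
    qed
  }
  {
    assume L: "right_ideal \<sigma> I"
    then have G: "add_subgroup I" unfolding right_ideal_def by blast
    show "x \<in> set_prod \<sigma> (I \<inter> tpoly) lpoly" if x: "x \<in> I" for x
    proof -
      have xl: "x \<in> lpoly" using G x unfolding add_subgroup_def by blast
      then obtain m where m: "m \<ge> 0" "\<forall>i. i < - m \<longrightarrow> x i = 0"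
        using bounded_support unfolding lpoly_def by blast
      define y where "y = lmult \<sigma> x (mono1 m)"
      have yI: "y \<in> I" using L x mono1_lpoly unfolding right_ideal_def y_def by blast
      have yl: "y \<in> lpoly" using G yI unfolding add_subgroup_def by blast
      have ys: "y n = x (n - m)" for n
        unfolding y_def by (rule lmult_mono_right) (use xl sp0 sp1 in \<open>auto simp: lpoly_def\<close>)
      have "y \<in> tpoly" unfolding tpoly_def
        using yl m by (auto simp: ys)
      moreover have "x = (\<lambda>n. \<Sum>k<(1::nat). lmult \<sigma> ((\<lambda>_. y) k) ((\<lambda>_. mono1 (-m)) k) n)"
      proof
        fix n
        have "lmult \<sigma> y (mono1 (-m)) n = y (n - - m)"
          by (rule lmult_mono_right) (use yl sp0 sp1 in \<open>auto simp: lpoly_def\<close>)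
        then show "x n = (\<Sum>k<(1::nat). lmult \<sigma> ((\<lambda>_. y) k) ((\<lambda>_. mono1 (-m)) k) n)"
          by (simp add: ys lt1)
      qed
      ultimately show ?thesis unfolding set_prod_def using yI mono1_lpoly
        by (intro CollectI exI[of _ 1] exI[of _ "\<lambda>_. y"] exI[of _ "\<lambda>_. mono1 (-m)"]) auto
    qed
    show "x \<in> I" if "x \<in> set_prod \<sigma> (I \<inter> tpoly) lpoly" for x
    proof -
      note xin = that
      obtain N :: nat and a b where xe: "x = (\<lambda>n. \<Sum>k<N. lmult \<sigma> (a k) (b k) n)"
        and ab: "\<forall>k<N. a k \<in> I \<inter> tpoly \<and> b k \<in> lpoly"
        using xin unfolding set_prod_def by blast
      have "\<forall>k<N. lmult \<sigma> (a k) (b k) \<in> I"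
      proof (intro allI impI)
        fix k assume "k < N"
        then have "a k \<in> I \<inter> tpoly \<and> b k \<in> lpoly" using ab by blast
        then show "lmult \<sigma> (a k) (b k) \<in> I" using L unfolding right_ideal_def by blast
      qed
      then show ?thesis unfolding xe by (rule sum_closed[OF G])
    qed
  }
qed

end
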